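(* Let $X$ be a topological space, $Y$ an Alexandroff space, $f:X\to Y$ a continuous surjection, and $\mathcal{S}=(\mathcal{O}(Y),\nabla_Y)$ a spacetime. Then there exists $\nabla_X:\mathcal{O}(X)\to\mathcal{O}(X)$ such that $\mathcal{T}=(\mathcal{O}(X),\nabla_X)$ is a spacetime and $f^{-1}:\mathcal{S}\to\mathcal{T}$ is a logical geometric map.
   Context: $\mathcal{O}(Z)$ denotes the locale of open subsets of a space $Z$ ordered by inclusion. A space is Alexandroff if arbitrary intersections of open sets are open. A spacetime is a pair $(\mathscr{X},\nabla)$ where $\mathscr{X}$ is a locale (complete lattice in which binary meet distributes over arbitrary joins; its monoidal structure is binary meet with unit the top) and $\nabla:\mathscr{X}\to\mathscr{X}$ preserves arbitrary joins. Its implication is $a\to b=\Box(a\Rightarrow b)$, where $\Box$ is the right adjoint of $\nabla$ and $\Rightarrow$ the Heyting implication; equivalently $a\wedge\nabla b\le c$ iff $b\le a\to c$. A geometric map $g:(\mathscr{X},\nabla_1)\to(\mathscr{Y},\nabla_2)$ between spacetimes is a map preserving arbitrary joins and finite meets with $g\nabla_1=\nabla_2 g$; it is logical if moreover it preserves the implication. *)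

theory Defs
  imports "HOL-Analysis.Analysis"
begin

text \<open>The locale O(Z) of open subsets of a topological space Z: joins are unions,
 binary meets are intersections, top is the whole space.\<close>

definition alexandroff_space :: "'a topology \<Rightarrow> bool" where
  "alexandroff_space Z \<longleftrightarrow>
     (\<forall>F. (\<forall>U\<in>F. openin Z U) \<longrightarrow> openin Z (topspace Z \<inter> \<Inter>F))"

definition spacetime :: "'a topology \<Rightarrow> ('a set \<Rightarrow> 'a set) \<Rightarrow> bool" where
  "spacetime Z N \<longleftrightarrow>
     (\<forall>U. openin Z U \<longrightarrow> openin Z (N U)) \<and>
     (\<forall>F. (\<forall>U\<in>F. openin Z U) \<longrightarrow> N (\<Union>F) = \<Union>(N ` F))"

definition heyting_imp :: "'a topology \<Rightarrow> 'a set \<Rightarrow> 'a set \<Rightarrow> 'a set" where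
  "heyting_imp Z a b = \<Union>{W. openin Z W \<and> W \<inter> a \<subseteq> b}"

text \<open>Box: the right adjoint of N on O(Z).\<close>
definition st_box :: "'a topology \<Rightarrow> ('a set \<Rightarrow> 'a set) \<Rightarrow> 'a set \<Rightarrow> 'a set" where
  "st_box Z N c = \<Union>{W. openin Z W \<and> N W \<subseteq> c}"

definition st_imp :: "'a topology \<Rightarrow> ('a set \<Rightarrow> 'a set) \<Rightarrow> 'a set \<Rightarrow> 'a set \<Rightarrow> 'a set" where
  "st_imp Z N a b = st_box Z N (heyting_imp Z a b)"

definition geometric_map ::
  "'a topology \<Rightarrow> ('a set \<Rightarrow> 'a set) \<Rightarrow> 'b topology \<Rightarrow> ('b set \<Rightarrow> 'b set) \<Rightarrow> ('a set \<Rightarrow> 'b set) \<Rightarrow> bool" where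
  "geometric_map Z1 N1 Z2 N2 g \<longleftrightarrow>
     (\<forall>U. openin Z1 U \<longrightarrow> openin Z2 (g U)) \<and>
     (\<forall>F. (\<forall>U\<in>F. openin Z1 U) \<longrightarrow> g (\<Union>F) = \<Union>(g ` F)) \<and>
     g (topspace Z1) = topspace Z2 \<and>
     (\<forall>U V. openin Z1 U \<longrightarrow> openin Z1 V \<longrightarrow> g (U \<inter> V) = g U \<inter> g V) \<and>
     (\<forall>U. openin Z1 U \<longrightarrow> g (N1 U) = N2 (g U))"

definition logical_map ::
  "'a topology \<Rightarrow> ('a set \<Rightarrow> 'a set) \<Rightarrow> 'b topology \<Rightarrow> ('b set \<Rightarrow> 'b set) \<Rightarrow> ('a set \<Rightarrow> 'b set) \<Rightarrow> bool" where
  "logical_map Z1 N1 Z2 N2 g \<longleftrightarrow>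
     geometric_map Z1 N1 Z2 N2 g \<and>
     (\<forall>U V. openin Z1 U \<longrightarrow> openin Z1 V \<longrightarrow>
        g (st_imp Z1 N1 U V) = st_imp Z2 N2 (g U) (g V))"

end

theory Submission
  imports Defs
begin

lemma heyting_adj:
  assumes "openin Z W"
  shows "W \<subseteq> heyting_imp Z a b \<longleftrightarrow> W \<inter> a \<subseteq> b"
  using assms unfolding heyting_imp_def by blast

lemma st_box_open: "openin Z (st_box Z N c)"
  unfolding st_box_def by (rule openin_Union) auto

lemma st_join:
  assumes "spacetime Z N" "\<And>U. U \<in> F \<Longrightarrow> openin Z U"
  shows "N (\<Union>F) = \<Union>(N ` F)"
  using assms unfolding spacetime_def by simp

lemma st_mono:
  assumes "spacetime Z N" "openin Z A" "openin Z B" "A \<subseteq> B"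
  shows "N A \<subseteq> N B"
proof -
  have "N (\<Union>{A, B}) = \<Union>(N ` {A, B})"
    by (rule st_join[OF assms(1)]) (use assms(2,3) in auto)
  moreover have "\<Union>{A, B} = B" using assms(4) by blast
  ultimately show ?thesis by auto
qed

lemma box_adj:
  assumes "spacetime Z N" "openin Z W"
  shows "W \<subseteq> st_box Z N c \<longleftrightarrow> N W \<subseteq> c"
proof
  assume "N W \<subseteq> c" then show "W \<subseteq> st_box Z N c"
    using assms(2) unfolding st_box_def by blast
next
  assume W: "W \<subseteq> st_box Z N c"
  let ?S = "{W. openin Z W \<and> N W \<subseteq> c}"
  have "N (\<Union>?S) = \<Union>(N ` ?S)" by (rule st_join[OF assms(1)]) simp
  also have "\<dots> \<subseteq> c" by auto
  finally have "N (st_box Z N c) \<subseteq> c" unfolding st_box_def .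
  moreover have "N W \<subseteq> N (st_box Z N c)"
    using st_mono[OF assms(1) assms(2) st_box_open W] .
  ultimately show "N W \<subseteq> c" by blast
qed

theorem corollary5p14:
  fixes X :: "'a topology" and Y :: "'b topology" and f :: "'a \<Rightarrow> 'b"
    and NY :: "'b set \<Rightarrow> 'b set"
  assumes "alexandroff_space Y"
    and "continuous_map X Y f"
    and "f ` topspace X = topspace Y"
    and "spacetime Y NY"
  shows "\<exists>NX :: 'a set \<Rightarrow> 'a set. spacetime X NX \<and>
           logical_map Y NY X NX (\<lambda>U. topspace X \<inter> f -` U)"
proof -
  note alex = assms(1) and cont = assms(2) and surj = assms(3) and stY = assms(4)
  define g where "g U = topspace X \<inter> f -` U" for U
  define h where "h S = topspace Y \<inter> \<Inter>{V. openin Y V \<and> S \<subseteq> V}" for S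
  have h_open: "openin Y (h S)" for S
    using alex unfolding alexandroff_space_def h_def by auto
  have h_least: "h S \<subseteq> V" if "openin Y V" "S \<subseteq> V" for S V
    using that unfolding h_def by blast
  have h_sup: "S \<subseteq> h S" if "S \<subseteq> topspace Y" for S
    using that unfolding h_def by blast
  have fX: "f ` W \<subseteq> topspace Y" if "W \<subseteq> topspace X" for W
    using that surj by auto
  have g_open: "openin X (g U)" if "openin Y U" for U
  proof -
    have "g U = {x \<in> topspace X. f x \<in> U}" unfolding g_def by blast
    then show ?thesis using openin_continuous_map_preimage[OF cont that] by simp
  qed
  have g_Union: "g (\<Union>F) = \<Union>(g ` F)" for F unfolding g_def by blast
  have g_inj: "A \<subseteq> B" if gi: "g A \<subseteq> g B" "A \<subseteq> topspace Y" for A B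
  proof
    fix y assume "y \<in> A"
    then have "y \<in> f ` topspace X" using gi(2) surj by auto
    then obtain x where "x \<in> topspace X" "f x = y" by (rule imageE) simp
    then show "y \<in> B" using gi(1) \<open>y \<in> A\<close> unfolding g_def by blast
  qed
  have fg: "f ` (g U) = U" if fgU: "U \<subseteq> topspace Y" for U
  proof
    show "f ` g U \<subseteq> U" unfolding g_def by auto
    show "U \<subseteq> f ` g U"
    proof
      fix y assume "y \<in> U"
      then have "y \<in> f ` topspace X" using fgU surj by auto
      then obtain x where "x \<in> topspace X" "f x = y" by (rule imageE) simp
      then show "y \<in> f ` g U" using \<open>y \<in> U\<close> unfolding g_def by auto
    qed
  qed
  have h_Union: "h (\<Union>F) = \<Union>(h ` F)" if hF: "\<And>S. S \<in> F \<Longrightarrow> S \<subseteq> topspace Y" for F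
  proof
    show "h (\<Union>F) \<subseteq> \<Union>(h ` F)"
      apply (rule h_least)
       apply (rule openin_Union) using h_open apply blast
      using h_sup hF by blast
    show "\<Union>(h ` F) \<subseteq> h (\<Union>F)"
    proof
      fix y assume "y \<in> \<Union>(h ` F)"
      then obtain S where S: "S \<in> F" "y \<in> h S" by blast
      have "h S \<subseteq> h (\<Union>F)"
        apply (rule h_least[OF h_open]) using h_sup hF S(1) by blast
      then show "y \<in> h (\<Union>F)" using S by blast
    qed
  qed
  have NYo: "openin Y (NY U)" if "openin Y U" for U
    using stY that unfolding spacetime_def by simp
  define NX where "NX W = g (NY (h (f ` W)))" for W
  have NXo: "openin X (NX W)" for W unfolding NX_def using g_open NYo h_open by blast
  have spX: "spacetime X NX"
    unfolding spacetime_def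
  proof (intro conjI allI impI)
    fix U show "openin X (NX U)" by (rule NXo)
  next
    fix F assume F: "\<forall>U\<in>F. openin X U"
    have "h (f ` \<Union>F) = h (\<Union>((`) f ` F))" by (simp add: image_Union)
    also have "\<dots> = \<Union>(h ` ((`) f ` F))"
      apply (rule h_Union) using F fX openin_subset by blast
    finally have e1: "h (f ` \<Union>F) = \<Union>((\<lambda>W. h (f ` W)) ` F)" by (simp add: image_image)
    have "NY (\<Union>((\<lambda>W. h (f ` W)) ` F)) = \<Union>(NY ` ((\<lambda>W. h (f ` W)) ` F))"
      by (rule st_join[OF stY]) (use h_open in auto)
    then show "NX (\<Union>F) = \<Union>(NX ` F)"
      unfolding NX_def e1 g_def by auto
  qed
  have NXg: "NX (g U) = g (NY U)" if "openin Y U" for U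
    unfolding NX_def using fg[OF openin_subset[OF that]] h_least[OF that] h_sup[OF openin_subset[OF that]]
    by (metis subset_antisym order_refl)
  have geo: "geometric_map Y NY X NX g"
    unfolding geometric_map_def
  proof (intro conjI allI impI)
    show "g (topspace Y) = topspace X" unfolding g_def using cont
      by (auto simp: continuous_map_def)
  qed (auto simp: g_open g_Union NXg, auto simp: g_def)
  have logic: "g (st_imp Y NY U V) = st_imp X NX (g U) (g V)"
    if U: "openin Y U" and V: "openin Y V" for U V
  proof -
    define H where "H = heyting_imp Y U V"
    define B where "B = st_box Y NY H"
    have Bo: "openin Y B" unfolding B_def by (rule st_box_open)
    have key: "NX W \<subseteq> heyting_imp X (g U) (g V) \<longleftrightarrow> W \<subseteq> g B" if W: "openin X W" for W
    proof -
      define K where "K = h (f ` W)"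
      have Ko: "openin Y K" unfolding K_def by (rule h_open)
      have "NX W \<subseteq> heyting_imp X (g U) (g V) \<longleftrightarrow> g (NY K) \<inter> g U \<subseteq> g V"
        using heyting_adj[OF NXo] unfolding NX_def K_def by blast
      also have "\<dots> \<longleftrightarrow> NY K \<inter> U \<subseteq> V"
      proof
        assume "g (NY K) \<inter> g U \<subseteq> g V"
        then have "g (NY K \<inter> U) \<subseteq> g V" unfolding g_def by blast
        then show "NY K \<inter> U \<subseteq> V" using g_inj openin_subset[OF U] by blast
      next
        assume "NY K \<inter> U \<subseteq> V" then show "g (NY K) \<inter> g U \<subseteq> g V" unfolding g_def by blast
      qed
      also have "\<dots> \<longleftrightarrow> NY K \<subseteq> H"
        unfolding H_def using heyting_adj[OF NYo[OF Ko]] by blast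
      also have "\<dots> \<longleftrightarrow> K \<subseteq> B"
        unfolding B_def using box_adj[OF stY Ko] by blast
      also have "\<dots> \<longleftrightarrow> f ` W \<subseteq> B"
        unfolding K_def using h_least[OF Bo] h_sup[OF fX[OF openin_subset[OF W]]] by blast
      also have "\<dots> \<longleftrightarrow> W \<subseteq> g B"
        using openin_subset[OF W] unfolding g_def by blast
      finally show ?thesis .
    qed
    have "st_imp X NX (g U) (g V) = \<Union>{W. openin X W \<and> W \<subseteq> g B}"
      unfolding st_imp_def st_box_def using key by blast
    also have "\<dots> = g B" using g_open[OF Bo] by blast
    finally show ?thesis unfolding st_imp_def B_def H_def by simp
  qed
  show ?thesis
    apply (rule exI[of _ NX])
    using spX geo logic unfolding logical_map_def g_def by blast
qed

end
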